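(* Let $\mathcal{T}=(V,E)$ be a rootless and leafless directed tree with countably infinite vertex set $V$, $\phi(x)$ the parent of $x\in V$, and $\mu$ a measure on $2^V$ with $0<\mu(\{x\})<\infty$ for every $x\in V$. Let $\{G_m\}_{m\in\mathbb{Z}}$ be a partition of $V$ with $G_{m+1}=\bigsqcup_{x\in G_m}\phi^{-1}(\{x\})$ for all $m\in\mathbb{Z}$, and let $\{\kappa_m\}_{m\in\mathbb{Z}}$ be positive integers and $\{\alpha_m\}_{m\in\mathbb{Z}}$ positive reals such that $\phi^{-1}(\{x\})$ has exactly $\kappa_m$ elements and $\mu(\{x\})=\alpha_m$ for all $x\in G_m$, $m\in\mathbb{Z}$. Define $\hat\kappa_m=\prod_{j=0}^{m-1}\kappa_j$ for $m\ge1$, $\hat\kappa_0=1$, $\hat\kappa_m=(\prod_{j=1}^{-m}\kappa_{-j})^{-1}$ for $m\le-1$. Suppose the composition operator $C_\phi$ in $L^2(\mu)$ is subnormal and $\nu$ is a representing measure of the two-sided Stieltjes moment sequence $\{\alpha_m\hat\kappa_m\}_{m\in\mathbb{Z}}$. Then $\operatorname{supp}\nu\neq\varnothing$ and: (i) $C_\phi\in\mathbf{B}(L^2(\mu))$ if and only if $\sup(\operatorname{supp}\nu)<\infty$; moreover, in this case $\|C_\phi\|^2=\sup(\operatorname{supp}\nu)$; (ii) for every positive real $c$, $\|C_\phi f\|\ge c\|f\|$ for all $f\in\mathcal{D}(C_\phi)$ if and only if $\inf(\operatorname{supp}\nu)\ge c^2$; (iii) $C_\phi$ is left semi-Fredholm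 if and only if $\inf(\operatorname{supp}\nu)>0$.
   Context: A directed tree is a connected directed graph without circuits in which every vertex has at most one parent; rootless: every vertex has a parent; leafless: every vertex has a child. $C_\phi f=f\circ\phi$ on $\mathcal{D}(C_\phi)=\{f\in L^2(\mu):f\circ\phi\in L^2(\mu)\}$. A two-sided sequence $\{a_m\}_{m\in\mathbb{Z}}$ is a two-sided Stieltjes moment sequence with representing measure $\nu$ if $\nu$ is a Borel measure on $(0,\infty)$ with $a_m=\int_{(0,\infty)}s^m\nu(\mathrm{d}s)$ for all $m\in\mathbb{Z}$; $\operatorname{supp}\nu$ is its closed support. $\mathbf{B}(L^2(\mu))$: bounded everywhere defined operators. A closed operator is left semi-Fredholm if it has closed range and finite-dimensional kernel. Subnormal: restriction of a normal operator in a larger Hilbert space, i.e. $\mathcal{D}(S)\subseteq\mathcal{D}(N)$ and $S=N$ on $\mathcal{D}(S)$. *)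

theory Defs
  imports "HOL-Analysis.Analysis"
begin

definition directed_tree :: "('v \<times> 'v) set \<Rightarrow> bool" where
  "directed_tree E \<longleftrightarrow>
     (\<forall>x y. (x, y) \<in> (E \<union> E\<inverse>)\<^sup>*) \<and>
     (\<forall>x. (x, x) \<notin> E\<^sup>+) \<and>
     (\<forall>x y z. (y, x) \<in> E \<and> (z, x) \<in> E \<longrightarrow> y = z)"

definition rootless :: "('v \<times> 'v) set \<Rightarrow> bool" where
  "rootless E \<longleftrightarrow> (\<forall>x. \<exists>y. (y, x) \<in> E)"

definition leafless :: "('v \<times> 'v) set \<Rightarrow> bool" where
  "leafless E \<longleftrightarrow> (\<forall>x. \<exists>y. (x, y) \<in> E)"

definition L2 :: "'v measure \<Rightarrow> ('v \<Rightarrow> complex) set" where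
  "L2 M = {f. (\<integral>\<^sup>+ x. ennreal ((cmod (f x))\<^sup>2) \<partial>M) < \<infinity>}"

definition L2norm :: "'v measure \<Rightarrow> ('v \<Rightarrow> complex) \<Rightarrow> real" where
  "L2norm M f = sqrt (enn2real (\<integral>\<^sup>+ x. ennreal ((cmod (f x))\<^sup>2) \<partial>M))"

definition comp_dom :: "'v measure \<Rightarrow> ('v \<Rightarrow> 'v) \<Rightarrow> ('v \<Rightarrow> complex) set" where
  "comp_dom M \<phi> = {f \<in> L2 M. f \<circ> \<phi> \<in> L2 M}"

definition comp_bounded :: "'v measure \<Rightarrow> ('v \<Rightarrow> 'v) \<Rightarrow> bool" where
  "comp_bounded M \<phi> \<longleftrightarrow> comp_dom M \<phi> = L2 M \<and>
     (\<exists>K. \<forall>f \<in> L2 M. L2norm M (f \<circ> \<phi>) \<le> K * L2norm M f)"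

definition comp_norm :: "'v measure \<Rightarrow> ('v \<Rightarrow> 'v) \<Rightarrow> real" where
  "comp_norm M \<phi> = Sup {L2norm M (f \<circ> \<phi>) | f. f \<in> L2 M \<and> L2norm M f \<le> 1}"

definition L2_converges :: "'v measure \<Rightarrow> (nat \<Rightarrow> 'v \<Rightarrow> complex) \<Rightarrow> ('v \<Rightarrow> complex) \<Rightarrow> bool" where
  "L2_converges M g h \<longleftrightarrow> (\<lambda>n. L2norm M (g n - h)) \<longlonglongrightarrow> 0"

definition comp_closed :: "'v measure \<Rightarrow> ('v \<Rightarrow> 'v) \<Rightarrow> bool" where
  "comp_closed M \<phi> \<longleftrightarrow>
     (\<forall>g f h. (\<forall>n. g n \<in> comp_dom M \<phi>) \<and> f \<in> L2 M \<and> h \<in> L2 M \<and>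
        L2_converges M g f \<and> L2_converges M (\<lambda>n. g n \<circ> \<phi>) h
        \<longrightarrow> f \<in> comp_dom M \<phi> \<and> f \<circ> \<phi> = h)"

definition comp_range :: "'v measure \<Rightarrow> ('v \<Rightarrow> 'v) \<Rightarrow> ('v \<Rightarrow> complex) set" where
  "comp_range M \<phi> = (\<lambda>f. f \<circ> \<phi>) ` comp_dom M \<phi>"

definition comp_kernel :: "'v measure \<Rightarrow> ('v \<Rightarrow> 'v) \<Rightarrow> ('v \<Rightarrow> complex) set" where
  "comp_kernel M \<phi> = {f \<in> comp_dom M \<phi>. f \<circ> \<phi> = (\<lambda>_. 0)}"

definition L2_closed_set :: "'v measure \<Rightarrow> ('v \<Rightarrow> complex) set \<Rightarrow> bool" where
  "L2_closed_set M A \<longleftrightarrow>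
     (\<forall>g h. (\<forall>n. g n \<in> A) \<and> h \<in> L2 M \<and> L2_converges M g h \<longrightarrow> h \<in> A)"

definition finite_dim :: "('v \<Rightarrow> complex) set \<Rightarrow> bool" where
  "finite_dim A \<longleftrightarrow> (\<exists>B. finite B \<and> (\<forall>f \<in> A. \<exists>c. f = (\<lambda>x. \<Sum>b\<in>B. c b * b x)))"

definition comp_left_semi_fredholm :: "'v measure \<Rightarrow> ('v \<Rightarrow> 'v) \<Rightarrow> bool" where
  "comp_left_semi_fredholm M \<phi> \<longleftrightarrow>
     comp_closed M \<phi> \<and> L2_closed_set M (comp_range M \<phi>) \<and> finite_dim (comp_kernel M \<phi>)"

section \<open>Hilbert spaces l^2(I) (every complex Hilbert space is unitarily equivalent to one)\<close>

definition l2 :: "('i \<Rightarrow> complex) set" where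
  "l2 = {f. (\<lambda>i. (cmod (f i))\<^sup>2) summable_on UNIV}"

definition l2inner :: "('i \<Rightarrow> complex) \<Rightarrow> ('i \<Rightarrow> complex) \<Rightarrow> complex" where
  "l2inner f g = (\<Sum>\<^sub>\<infinity>i. f i * cnj (g i))"

definition l2norm :: "('i \<Rightarrow> complex) \<Rightarrow> real" where
  "l2norm f = sqrt (\<Sum>\<^sub>\<infinity>i. (cmod (f i))\<^sup>2)"

definition l2_converges :: "(nat \<Rightarrow> 'i \<Rightarrow> complex) \<Rightarrow> ('i \<Rightarrow> complex) \<Rightarrow> bool" where
  "l2_converges g h \<longleftrightarrow> (\<lambda>n. l2norm (g n - h)) \<longlonglongrightarrow> 0"

definition lin_op :: "('i \<Rightarrow> complex) set \<Rightarrow> (('i \<Rightarrow> complex) \<Rightarrow> ('i \<Rightarrow> complex)) \<Rightarrow> bool" where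
  "lin_op D N \<longleftrightarrow> D \<subseteq> l2 \<and> (\<lambda>_. 0) \<in> D \<and>
     (\<forall>f\<in>D. \<forall>g\<in>D. \<forall>a b. (\<lambda>i. a * f i + b * g i) \<in> D \<and>
        N (\<lambda>i. a * f i + b * g i) = (\<lambda>i. a * N f i + b * N g i)) \<and>
     (\<forall>f\<in>D. N f \<in> l2)"

definition densely_defined :: "('i \<Rightarrow> complex) set \<Rightarrow> bool" where
  "densely_defined D \<longleftrightarrow> (\<forall>g\<in>l2. \<forall>e>0. \<exists>f\<in>D. l2norm (f - g) < e)"

definition closed_op :: "('i \<Rightarrow> complex) set \<Rightarrow> (('i \<Rightarrow> complex) \<Rightarrow> ('i \<Rightarrow> complex)) \<Rightarrow> bool" where
  "closed_op D N \<longleftrightarrow>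
     (\<forall>g f h. (\<forall>n. g n \<in> D) \<and> f \<in> l2 \<and> h \<in> l2 \<and> l2_converges g f \<and>
        l2_converges (\<lambda>n. N (g n)) h \<longrightarrow> f \<in> D \<and> N f = h)"

definition adj_dom :: "('i \<Rightarrow> complex) set \<Rightarrow> (('i \<Rightarrow> complex) \<Rightarrow> ('i \<Rightarrow> complex)) \<Rightarrow> ('i \<Rightarrow> complex) set" where
  "adj_dom D N = {g \<in> l2. \<exists>h\<in>l2. \<forall>f\<in>D. l2inner (N f) g = l2inner f h}"

definition adj_op :: "('i \<Rightarrow> complex) set \<Rightarrow> (('i \<Rightarrow> complex) \<Rightarrow> ('i \<Rightarrow> complex)) \<Rightarrow> ('i \<Rightarrow> complex) \<Rightarrow> ('i \<Rightarrow> complex)" where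
  "adj_op D N g = (SOME h. h \<in> l2 \<and> (\<forall>f\<in>D. l2inner (N f) g = l2inner f h))"

definition normal_op :: "('i \<Rightarrow> complex) set \<Rightarrow> (('i \<Rightarrow> complex) \<Rightarrow> ('i \<Rightarrow> complex)) \<Rightarrow> bool" where
  "normal_op D N \<longleftrightarrow> lin_op D N \<and> densely_defined D \<and> closed_op D N \<and>
     {f \<in> D. N f \<in> adj_dom D N} = {f \<in> adj_dom D N. adj_op D N f \<in> D} \<and>
     (\<forall>f \<in> {f \<in> D. N f \<in> adj_dom D N}. adj_op D N (N f) = N (adj_op D N f))"

definition comp_subnormal_in ::
  "'i itself \<Rightarrow> 'v measure \<Rightarrow> ('v \<Rightarrow> 'v) \<Rightarrow> bool" where
  "comp_subnormal_in _ M \<phi> \<longleftrightarrow>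
     (\<exists>(U :: ('v \<Rightarrow> complex) \<Rightarrow> ('i \<Rightarrow> complex)) D N.
        (\<forall>f\<in>L2 M. U f \<in> l2 \<and> l2norm (U f) = L2norm M f) \<and>
        (\<forall>f\<in>L2 M. \<forall>g\<in>L2 M. \<forall>a b. U (\<lambda>x. a * f x + b * g x) = (\<lambda>i. a * U f i + b * U g i)) \<and>
        normal_op D N \<and>
        (\<forall>f \<in> comp_dom M \<phi>. U f \<in> D \<and> N (U f) = U (f \<circ> \<phi>)))"

definition kappa_hat :: "(int \<Rightarrow> nat) \<Rightarrow> int \<Rightarrow> real" where
  "kappa_hat \<kappa> m =
     (if m \<ge> 1 then (\<Prod>j\<in>{0..m-1}. real (\<kappa> j))
      else if m = 0 then 1
      else inverse (\<Prod>j\<in>{1..-m}. real (\<kappa> (-j))))"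

definition representing_measure :: "(int \<Rightarrow> real) \<Rightarrow> real measure \<Rightarrow> bool" where
  "representing_measure a \<nu> \<longleftrightarrow> sets \<nu> = sets borel \<and> emeasure \<nu> {..0} = 0 \<and>
     (\<forall>m::int. ennreal (a m) = (\<integral>\<^sup>+ s. ennreal (s powi m) \<partial>\<nu>))"

definition msupp :: "real measure \<Rightarrow> real set" where
  "msupp \<nu> = {s. 0 < s \<and> (\<forall>U. open U \<and> s \<in> U \<longrightarrow> emeasure \<nu> U > 0)}"

end

theory Submission
  imports Defs
begin


lemma AE_msupp:
  assumes sets: "sets \<nu> = sets borel" and neg: "emeasure \<nu> {..0::real} = 0"
  shows "AE s in \<nu>. s \<in> msupp \<nu>"
proof -
  define F where "F = {U::real set. open U \<and> emeasure \<nu> U = 0}"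
  obtain F' where F': "F' \<subseteq> F" "countable F'" "\<Union>F' = \<Union>F"
    using Lindelof[of F] unfolding F_def by blast
  have "(\<Union>U\<in>F'. U) \<in> null_sets \<nu>"
  proof (rule null_sets_UN'[OF F'(2)])
    fix U assume "U \<in> F'"
    then have "open U" "emeasure \<nu> U = 0" using F' F_def by auto
    then show "U \<in> null_sets \<nu>" using sets by (auto simp: null_sets_def)
  qed
  moreover have "{..0::real} \<in> null_sets \<nu>" using neg sets by (auto simp: null_sets_def)
  ultimately have N: "(\<Union>F) \<union> {..0} \<in> null_sets \<nu>" using F'(3) by auto
  show ?thesis
  proof (rule AE_I'[OF N])
    show "{x \<in> space \<nu>. x \<notin> msupp \<nu>} \<subseteq> \<Union>F \<union> {..0}"
    proof
    fix s assume "s \<in> {x \<in> space \<nu>. x \<notin> msupp \<nu>}"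
    then have s: "s \<notin> msupp \<nu>" by auto
    show "s \<in> \<Union>F \<union> {..0}"
    proof (cases "s \<le> 0")
    case False
    then obtain U where "open U" "s \<in> U" "\<not> emeasure \<nu> U > 0"
      using s unfolding msupp_def by auto
    then have "U \<in> F" unfolding F_def by (auto simp: zero_less_iff_neq_zero)
    then show ?thesis using \<open>s \<in> U\<close> by auto
  qed auto
  qed
  qed
qed

lemma powi_meas: "(\<lambda>s::real. ennreal (s powi m)) \<in> borel_measurable borel"
  by (cases "m \<ge> 0") (auto simp: power_int_def)

lemma pow_unbounded:
  fixes x u K :: real
  assumes "x > 1" "u > 0" "\<And>n. u * x ^ n \<le> K"
  shows False
proof -
  obtain n where "K / u < x ^ n" using real_arch_pow[OF assms(1)] by blast
  then have "K < u * x ^ n" using assms(2) by (simp add: field_simps)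
  then show False using assms(3)[of n] by simp
qed

locale mom =
  fixes \<nu> :: "real measure" and a :: "int \<Rightarrow> real"
  assumes sets: "sets \<nu> = sets borel" and neg: "emeasure \<nu> {..0::real} = 0"
    and mom: "\<And>m. ennreal (a m) = (\<integral>\<^sup>+ s. ennreal (s powi m) \<partial>\<nu>)"
    and apos: "\<And>m. a m > 0"
begin

lemma meas[measurable]: "(\<lambda>s::real. ennreal (s powi m)) \<in> borel_measurable \<nu>"
  using powi_meas measurable_cong_sets[OF sets refl] by blast

lemma AE_S: "AE s in \<nu>. s \<in> msupp \<nu>" using AE_msupp[OF sets neg] .

lemma AE_pos: "AE s in \<nu>. s > 0" using AE_S by eventually_elim (auto simp: msupp_def)

lemma S_ne: "msupp \<nu> \<noteq> {}"
proof
  assume "msupp \<nu> = {}"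
  then have "AE s in \<nu>. False" using AE_S by simp
  then have "AE s in \<nu>. ennreal (s powi 0) = 0" by eventually_elim simp
  then have "(\<integral>\<^sup>+ s. ennreal (s powi 0) \<partial>\<nu>) = 0" by (subst nn_integral_0_iff_AE) auto
  then show False using mom[of 0] apos[of 0] by simp
qed

lemma S_pos: "s \<in> msupp \<nu> \<Longrightarrow> s > 0" by (auto simp: msupp_def)

lemma upper:
  assumes b: "\<And>s. s \<in> msupp \<nu> \<Longrightarrow> s \<le> b"
  shows "a (m+1) \<le> b * a m"
proof -
  obtain s0 where "s0 \<in> msupp \<nu>" using S_ne by auto
  then have b0: "b \<ge> 0" using b S_pos by force
  have "AE s in \<nu>. ennreal (s powi (m+1)) \<le> ennreal b * ennreal (s powi m)"
    using AE_S
  proof eventually_elim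
    case (elim s)
    then have "s > 0" "s \<le> b" using S_pos b by auto
    then have "s powi (m+1) \<le> b * s powi m"
      by (simp add: power_int_add_1' mult_right_mono)
    then show ?case using b0 \<open>s > 0\<close> by (simp add: ennreal_mult' [symmetric] ennreal_leI)
  qed
  then have "ennreal (a (m+1)) \<le> ennreal b * ennreal (a m)"
    unfolding mom by (subst nn_integral_cmult[symmetric]) (auto intro: nn_integral_mono_AE simp: sets)
  then have "ennreal (a (m+1)) \<le> ennreal (b * a m)" using b0 apos[of m] by (simp add: ennreal_mult)
  then show ?thesis using b0 apos[of m] by (smt (verit) ennreal_le_iff2 mult_nonneg_nonneg)
qed

lemma lower:
  assumes b: "\<And>s. s \<in> msupp \<nu> \<Longrightarrow> c \<le> s" and c: "c \<ge> 0"
  shows "c * a m \<le> a (m+1)"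
proof -
  have "AE s in \<nu>. ennreal c * ennreal (s powi m) \<le> ennreal (s powi (m+1))"
    using AE_S
  proof eventually_elim
    case (elim s)
    then have "s > 0" "c \<le> s" using S_pos b by auto
    then have "c * s powi m \<le> s powi (m+1)"
      by (simp add: power_int_add_1' mult_right_mono)
    then show ?case using c \<open>s > 0\<close> by (simp add: ennreal_mult' [symmetric] ennreal_leI)
  qed
  then have "ennreal c * ennreal (a m) \<le> ennreal (a (m+1))"
    unfolding mom by (subst nn_integral_cmult[symmetric]) (auto intro: nn_integral_mono_AE simp: sets)
  then have "ennreal (c * a m) \<le> ennreal (a (m+1))" using c apos[of m] by (simp add: ennreal_mult)
  then show ?thesis using apos[of "m+1"] by (smt (verit) ennreal_le_iff2 mult_nonneg_nonneg)
qed

lemma ball_meas: "ball t r \<in> sets \<nu>" using sets by simp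

lemma sup_bound:
  assumes R: "\<And>m. a (m+1) \<le> R * a m" and t: "t \<in> msupp \<nu>"
  shows "t \<le> R"
proof (rule ccontr)
  assume tR: "\<not> t \<le> R"
  have "0 < R * a 0" using R[of 0] apos[of 1] by simp
  then have R0: "R > 0" using apos[of 0] by (simp add: zero_less_mult_iff)
  define t' where "t' = (t+R)/2"
  have t': "R < t'" "t' < t" using tR by (auto simp: t'_def)
  define U where "U = ball t (t - t')"
  have Upos: "emeasure \<nu> U > 0" using t t' unfolding msupp_def U_def by auto
  have anR: "a (int n) \<le> R^n * a 0" for n
  proof (induction n)
    case (Suc n)
    have "a (int (Suc n)) = a (int n + 1)" by (simp add: add.commute)
    also have "\<dots> \<le> R * a (int n)" by (rule R)
    also have "\<dots> \<le> R * (R^n * a 0)" using Suc R0 by simp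
    finally show ?case by (simp add: mult.assoc)
  qed simp
  have low: "ennreal (t'^n) * emeasure \<nu> U \<le> ennreal (a (int n))" for n
  proof -
    have "ennreal (t'^n) * emeasure \<nu> U = (\<integral>\<^sup>+ s. ennreal (t'^n) * indicator U s \<partial>\<nu>)"
      by (simp add: nn_integral_cmult_indicator U_def ball_meas)
    also have "\<dots> \<le> (\<integral>\<^sup>+ s. ennreal (s powi (int n)) \<partial>\<nu>)"
    proof (rule nn_integral_mono)
      fix s show "ennreal (t'^n) * indicator U s \<le> ennreal (s powi (int n))"
      proof (cases "s \<in> U")
        case True
        then have "t' < s" unfolding U_def by (auto simp: dist_real_def)
        then have "t'^n \<le> s^n" using t' R0 by (intro power_mono) auto
        then show ?thesis using True by (simp add: ennreal_leI)
      qed simp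
    qed
    finally show ?thesis using mom[of "int n"] by simp
  qed
  have "emeasure \<nu> U \<le> ennreal (a 0)" using low[of 0] by simp
  then have fin: "emeasure \<nu> U < \<infinity>" by (simp add: le_less_trans)
  define u where "u = enn2real (emeasure \<nu> U)"
  have uE: "emeasure \<nu> U = ennreal u" using fin by (simp add: u_def ennreal_enn2real_if)
  have u0: "u > 0" using Upos uE by simp
  show False
  proof (rule pow_unbounded[of "t'/R" u "a 0"])
    show "1 < t'/R" using t' R0 by simp
    show "0 < u" by fact
    fix n
    have "ennreal (t'^n * u) \<le> ennreal (a (int n))" using low[of n] uE u0
      by (simp add: ennreal_mult'')
    then have "t'^n * u \<le> a (int n)" using apos[of "int n"] by (simp add: ennreal_le_iff2)
    also have "\<dots> \<le> R^n * a 0" by (rule anR)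
    finally have "t'^n * u \<le> R^n * a 0" .
    then show "u * (t'/R)^n \<le> a 0" using R0 by (simp add: power_divide field_simps)
  qed
qed

lemma inf_bound:
  assumes c0: "c > 0" and c: "\<And>m. c * a m \<le> a (m+1)" and t: "t \<in> msupp \<nu>"
  shows "c \<le> t"
proof (rule ccontr)
  assume tc: "\<not> c \<le> t"
  have t0: "t > 0" using t S_pos by auto
  define t' where "t' = (t+c)/2"
  have t': "t < t'" "t' < c" using tc by (auto simp: t'_def)
  define U where "U = ball t (t' - t)"
  have Upos: "emeasure \<nu> U > 0" using t t' unfolding msupp_def U_def by auto
  have anc: "a (- int n) \<le> a 0 / c^n" for n
  proof (induction n)
    case (Suc n)
    have "c * a (- int (Suc n)) \<le> a (- int (Suc n) + 1)" by (rule c)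
    also have "- int (Suc n) + 1 = - int n" by simp
    finally have "c * a (- int (Suc n)) \<le> a 0 / c^n" using Suc by simp
    then show ?case using c0 by (simp add: field_simps)
  qed simp
  have low: "ennreal ((1/t')^n) * emeasure \<nu> U \<le> ennreal (a (- int n))" for n
  proof -
    have "ennreal ((1/t')^n) * emeasure \<nu> U = (\<integral>\<^sup>+ s. ennreal ((1/t')^n) * indicator U s \<partial>\<nu>)"
      by (simp add: nn_integral_cmult_indicator U_def ball_meas)
    also have "\<dots> \<le> (\<integral>\<^sup>+ s. ennreal (s powi (- int n)) \<partial>\<nu>)"
    proof (rule nn_integral_mono_AE)
      show "AE s in \<nu>. ennreal ((1/t')^n) * indicator U s \<le> ennreal (s powi (- int n))"
        using AE_pos
      proof eventually_elim
        case (elim s)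
        show ?case
        proof (cases "s \<in> U")
          case True
          then have "s < t'" unfolding U_def by (auto simp: dist_real_def)
          then have "s^n \<le> t'^n" using elim by (intro power_mono) auto
          then have "inverse (t'^n) \<le> inverse (s^n)" using elim
            by (intro le_imp_inverse_le) auto
          then have "(1/t')^n \<le> inverse (s^n)" by (simp add: power_one_over inverse_eq_divide)
          then show ?thesis using True by (simp add: ennreal_leI power_int_minus)
        qed simp
      qed
    qed
    finally show ?thesis using mom[of "- int n"] by simp
  qed
  have "emeasure \<nu> U \<le> ennreal (a 0)" using low[of 0] by simp
  then have fin: "emeasure \<nu> U < \<infinity>" by (simp add: le_less_trans)
  define u where "u = enn2real (emeasure \<nu> U)"
  have uE: "emeasure \<nu> U = ennreal u" using fin by (simp add: u_def ennreal_enn2real_if)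
  have u0: "u > 0" using Upos uE by simp
  show False
  proof (rule pow_unbounded[of "c/t'" u "a 0"])
    show "1 < c/t'" using t' t0 by simp
    show "0 < u" by fact
    fix n
    have "ennreal ((1/t')^n * u) \<le> ennreal (a (- int n))" using low[of n] uE u0
      by (simp add: ennreal_mult'')
    then have "(1/t')^n * u \<le> a (- int n)" using apos[of "- int n"] by (simp add: ennreal_le_iff2)
    also have "\<dots> \<le> a 0 / c^n" by (rule anc)
    finally have "(1/t')^n * u \<le> a 0 / c^n" .
    then show "u * (c/t')^n \<le> a 0" using c0 t' t0 by (simp add: power_divide field_simps)
  qed
qed

end


primrec vseq :: "('v \<Rightarrow> real) \<Rightarrow> nat \<Rightarrow> 'v" where
  "vseq \<rho> 0 = (SOME y. \<rho> y < 1)"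
| "vseq \<rho> (Suc k) = (SOME y. \<rho> y < min ((1/2)^Suc k) (\<rho> (vseq \<rho> k)))"

locale disc =
  fixes M :: "'v measure" and \<phi> :: "'v \<Rightarrow> 'v" and \<rho> :: "'v \<Rightarrow> real"
  assumes sets_M: "sets M = UNIV"
    and cntbl: "countable (UNIV :: 'v set)"
    and pts: "\<And>x. 0 < emeasure M {x} \<and> emeasure M {x} < \<infinity>"
    and surj: "\<And>y. \<exists>x. \<phi> x = y"
    and fib: "\<And>y. emeasure M (\<phi> -` {y}) = ennreal (\<rho> y) * emeasure M {y}"
    and \<rho>_pos: "\<And>y. \<rho> y > 0"
begin

abbreviation Q where "Q f \<equiv> (\<integral>\<^sup>+ x. ennreal ((cmod (f x))\<^sup>2) \<partial>M)"

definition w where "w y = enn2real (emeasure M {y})"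

lemma wE: "emeasure M {y} = ennreal (w y)" and w_pos: "w y > 0"
  using pts[of y] by (auto simp: w_def ennreal_enn2real_if enn2real_positive_iff)

lemma w_ne0[simp]: "w y \<noteq> 0" using w_pos[of y] by simp
lemma w_nonneg[simp]: "0 \<le> w y" using w_pos[of y] by simp
lemma rho_nonneg[simp]: "0 \<le> \<rho> y" using \<rho>_pos[of y] by simp

lemma space_M: "space M = UNIV"
  using sets.sets_into_space[of UNIV M] sets_M by auto

lemma sM: "sets M = sets (count_space UNIV)" using sets_M by simp

lemma meas[measurable]: "f \<in> measurable M borel"
  using measurable_cong_sets[OF sM refl, of borel] by auto

lemma mphi: "\<phi> \<in> measurable M M"
  using measurable_cong_sets[OF sM sM] by auto

lemma sets_M': "sets M = Pow UNIV" using sets_M by simp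

lemma distr_eq: "distr M M \<phi> = density M (\<lambda>y. ennreal (\<rho> y))"
proof (rule measure_eqI_countable[where A=UNIV])
  show "sets (distr M M \<phi>) = Pow UNIV" using sets_M by simp
  show "sets (density M (\<lambda>y. ennreal (\<rho> y))) = Pow UNIV" using sets_M by simp
  show "countable (UNIV :: 'v set)" by (rule cntbl)
  fix y :: 'v
  have m: "\<phi> \<in> measurable M M" by (rule mphi)
  have "emeasure (distr M M \<phi>) {y} = emeasure M (\<phi> -` {y})"
    using m sets_M by (simp add: emeasure_distr space_M)
  also have "\<dots> = ennreal (\<rho> y) * emeasure M {y}" by (rule fib)
  also have "\<dots> = (\<integral>\<^sup>+ x. ennreal (\<rho> y) * indicator {y} x \<partial>M)"
    using sets_M by (simp add: nn_integral_cmult_indicator)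
  also have "\<dots> = (\<integral>\<^sup>+ x. ennreal (\<rho> x) * indicator {y} x \<partial>M)"
    by (intro nn_integral_cong) (auto split: split_indicator)
  also have "\<dots> = emeasure (density M (\<lambda>y. ennreal (\<rho> y))) {y}"
    using sets_M by (simp add: emeasure_density)
  finally show "emeasure (distr M M \<phi>) {y} = emeasure (density M (\<lambda>y. ennreal (\<rho> y))) {y}" .
qed

lemma comp_int: "(\<integral>\<^sup>+ x. g (\<phi> x) \<partial>M) = (\<integral>\<^sup>+ y. ennreal (\<rho> y) * g y \<partial>M)"
proof -
  have m: "\<phi> \<in> measurable M M" by (rule mphi)
  have "(\<integral>\<^sup>+ x. g (\<phi> x) \<partial>M) = (\<integral>\<^sup>+ y. g y \<partial>distr M M \<phi>)"
    by (rule nn_integral_distr[symmetric, OF m]) (simp add: measurable_cong_sets[OF sets_distr refl] meas)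
  also have "\<dots> = (\<integral>\<^sup>+ y. ennreal (\<rho> y) * g y \<partial>M)"
    unfolding distr_eq by (rule nn_integral_density) auto
  finally show ?thesis .
qed

lemma Q_comp: "Q (f \<circ> \<phi>) = (\<integral>\<^sup>+ y. ennreal (\<rho> y) * ennreal ((cmod (f y))\<^sup>2) \<partial>M)"
  using comp_int[of "\<lambda>y. ennreal ((cmod (f y))\<^sup>2)"] by simp

lemma Q_comp': "Q (\<lambda>x. f (\<phi> x)) = (\<integral>\<^sup>+ y. ennreal (\<rho> y) * ennreal ((cmod (f y))\<^sup>2) \<partial>M)"
  using Q_comp[of f] by simp

lemma Q_pt: "ennreal ((cmod (f y))\<^sup>2) * emeasure M {y} \<le> Q f"
proof -
  have "ennreal ((cmod (f y))\<^sup>2) * emeasure M {y} = (\<integral>\<^sup>+ x. ennreal ((cmod (f y))\<^sup>2) * indicator {y} x \<partial>M)"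
    using sets_M by (simp add: nn_integral_cmult_indicator)
  also have "\<dots> \<le> Q f" by (intro nn_integral_mono) (auto split: split_indicator)
  finally show ?thesis .
qed

lemma pt_norm:
  assumes "d \<in> L2 M" shows "cmod (d y) * sqrt (w y) \<le> L2norm M d"
proof -
  have fin: "Q d < top" using assms by (simp add: L2_def)
  have "ennreal ((cmod (d y))\<^sup>2 * w y) \<le> Q d"
    using Q_pt[of d y] w_pos[of y] by (simp add: wE ennreal_mult)
  then have "(cmod (d y))\<^sup>2 * w y \<le> enn2real (Q d)"
    using enn2real_mono[OF _ fin] w_pos[of y] by fastforce
  then have "sqrt ((cmod (d y))\<^sup>2 * w y) \<le> sqrt (enn2real (Q d))" by (rule real_sqrt_le_mono)
  then show ?thesis by (simp add: L2norm_def real_sqrt_mult)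
qed

lemma L2_diff:
  assumes "f \<in> L2 M" "g \<in> L2 M" shows "f - g \<in> L2 M"
proof -
  have "Q (f - g) \<le> (\<integral>\<^sup>+ x. 2 * ennreal ((cmod (f x))\<^sup>2) + 2 * ennreal ((cmod (g x))\<^sup>2) \<partial>M)"
  proof (intro nn_integral_mono)
    fix x
    have "(cmod (f x - g x))\<^sup>2 \<le> (cmod (f x) + cmod (g x))\<^sup>2"
      by (intro power_mono norm_triangle_ineq4) auto
    also have "\<dots> \<le> 2 * (cmod (f x))\<^sup>2 + 2 * (cmod (g x))\<^sup>2"
    proof -
      have "0 \<le> (cmod (f x) - cmod (g x))\<^sup>2" by simp
      then show ?thesis by (simp add: power2_sum power2_diff)
    qed
    finally have "(cmod ((f - g) x))\<^sup>2 \<le> 2 * (cmod (f x))\<^sup>2 + 2 * (cmod (g x))\<^sup>2" by simp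
    then have "ennreal ((cmod ((f - g) x))\<^sup>2) \<le> ennreal (2 * (cmod (f x))\<^sup>2 + 2 * (cmod (g x))\<^sup>2)"
      by (rule ennreal_leI)
    also have "\<dots> = 2 * ennreal ((cmod (f x))\<^sup>2) + 2 * ennreal ((cmod (g x))\<^sup>2)"
      by (subst ennreal_plus) (auto simp: ennreal_mult')
    finally show "ennreal ((cmod ((f - g) x))\<^sup>2) \<le> 2 * ennreal ((cmod (f x))\<^sup>2) + 2 * ennreal ((cmod (g x))\<^sup>2)" .
  qed
  also have "\<dots> = 2 * Q f + 2 * Q g"
    by (simp add: nn_integral_add nn_integral_cmult)
  also have "\<dots> < \<infinity>" using assms by (simp add: L2_def ennreal_mult_less_top)
  finally show ?thesis by (simp add: L2_def)
qed

lemma L2_conv_pt: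
  assumes "L2_converges M g f" "\<And>n. g n - f \<in> L2 M"
  shows "(\<lambda>n. g n y) \<longlonglongrightarrow> f y"
proof -
  have "(\<lambda>n. g n y - f y) \<longlonglongrightarrow> 0"
  proof (rule Lim_null_comparison)
    show "\<forall>\<^sub>F n in sequentially. norm (g n y - f y) \<le> L2norm M (g n - f) / sqrt (w y)"
      using pt_norm[OF assms(2), of _ y] w_pos[of y] by (simp add: field_simps)
    show "(\<lambda>n. L2norm M (g n - f) / sqrt (w y)) \<longlonglongrightarrow> 0"
      using assms(1) unfolding L2_converges_def by (intro tendsto_divide_zero)
  qed
  then show ?thesis by (simp add: LIM_zero_iff)
qed

definition e :: "'v \<Rightarrow> complex \<Rightarrow> 'v \<Rightarrow> complex" where
  "e y c = (\<lambda>x. if x = y then c else 0)"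

lemma Q_e: "Q (e y c) = ennreal ((cmod c)\<^sup>2 * w y)"
proof -
  have "Q (e y c) = (\<integral>\<^sup>+ x. ennreal ((cmod c)\<^sup>2) * indicator {y} x \<partial>M)"
    by (intro nn_integral_cong) (auto simp: e_def split: split_indicator)
  also have "\<dots> = ennreal ((cmod c)\<^sup>2) * ennreal (w y)"
    using sets_M by (simp add: nn_integral_cmult_indicator wE)
  finally show ?thesis by (simp add: ennreal_mult)
qed

lemma Q_e_comp: "Q (\<lambda>x. e y c (\<phi> x)) = ennreal (\<rho> y * (cmod c)\<^sup>2 * w y)"
proof -
  have "Q (e y c \<circ> \<phi>) = (\<integral>\<^sup>+ x. ennreal (\<rho> y * (cmod c)\<^sup>2) * indicator {y} x \<partial>M)"
    unfolding Q_comp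
    by (intro nn_integral_cong) (auto simp: e_def ennreal_mult \<rho>_pos less_imp_le split: split_indicator)
  also have "\<dots> = ennreal (\<rho> y * (cmod c)\<^sup>2) * ennreal (w y)"
    using sets_M by (simp add: nn_integral_cmult_indicator wE)
  finally show ?thesis by (simp add: ennreal_mult)
qed

lemma e_dom: "e y c \<in> comp_dom M \<phi>" and e_L2: "e y c \<in> L2 M"
  by (auto simp: comp_dom_def L2_def Q_e Q_e_comp)

lemma L2norm_e: "L2norm M (e y c) = cmod c * sqrt (w y)"
  using w_pos[of y] by (simp add: L2norm_def Q_e real_sqrt_mult)

lemma L2norm_e_comp: "L2norm M (e y c \<circ> \<phi>) = cmod c * sqrt (\<rho> y * w y)"
  using w_pos[of y] \<rho>_pos[of y] by (simp add: L2norm_def Q_e_comp real_sqrt_mult)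

lemma Qle:
  assumes "\<And>y. \<rho> y \<le> B" shows "Q (f \<circ> \<phi>) \<le> ennreal B * Q f"
proof -
  have "Q (f \<circ> \<phi>) \<le> (\<integral>\<^sup>+ y. ennreal B * ennreal ((cmod (f y))\<^sup>2) \<partial>M)"
    unfolding Q_comp
    by (intro nn_integral_mono mult_right_mono ennreal_leI assms) auto
  also have "\<dots> = ennreal B * Q f" by (simp add: nn_integral_cmult)
  finally show ?thesis .
qed

lemma Qge:
  assumes "\<And>y. b \<le> \<rho> y" shows "ennreal b * Q f \<le> Q (f \<circ> \<phi>)"
proof -
  have "ennreal b * Q f = (\<integral>\<^sup>+ y. ennreal b * ennreal ((cmod (f y))\<^sup>2) \<partial>M)"
    by (simp add: nn_integral_cmult)
  also have "\<dots> \<le> Q (f \<circ> \<phi>)"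
    unfolding Q_comp
    by (intro nn_integral_mono mult_right_mono ennreal_leI assms) auto
  finally show ?thesis .
qed

lemma zero_L2: "(\<lambda>_. 0) \<in> L2 M" and L2norm_zero: "L2norm M (\<lambda>_. 0) = 0"
  by (auto simp: L2_def L2norm_def)

lemma norm_lower:
  assumes "comp_bounded M \<phi>" shows "\<rho> y \<le> (comp_norm M \<phi>)\<^sup>2"
proof -
  obtain K where K: "\<And>f. f \<in> L2 M \<Longrightarrow> L2norm M (f \<circ> \<phi>) \<le> K * L2norm M f"
    using assms unfolding comp_bounded_def by blast
  define A where "A = {L2norm M (f \<circ> \<phi>) | f. f \<in> L2 M \<and> L2norm M f \<le> 1}"
  have bdd: "bdd_above A"
  proof (rule bdd_aboveI)
    fix z assume "z \<in> A"
    then obtain f where f: "f \<in> L2 M" "L2norm M f \<le> 1" "z = L2norm M (f \<circ> \<phi>)"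
      unfolding A_def by blast
    have n0: "0 \<le> L2norm M f" by (simp add: L2norm_def)
    have "z \<le> K * L2norm M f" using K f by simp
    also have "\<dots> \<le> \<bar>K\<bar> * L2norm M f" using n0 by (simp add: mult_right_mono)
    also have "\<dots> \<le> \<bar>K\<bar>" using f(2) n0 by (simp add: mult_left_le)
    finally show "z \<le> \<bar>K\<bar>" .
  qed
  define c where "c = complex_of_real (1 / sqrt (w y))"
  have cm: "cmod c = 1 / sqrt (w y)" using w_pos[of y] by (simp add: c_def norm_divide)
  have "L2norm M (e y c) = 1" using w_pos[of y] by (simp add: L2norm_e cm)
  moreover have "L2norm M (e y c \<circ> \<phi>) = sqrt (\<rho> y)"
    using w_pos[of y] by (simp add: L2norm_e_comp cm real_sqrt_mult)
  ultimately have "sqrt (\<rho> y) \<in> A" unfolding A_def mem_Collect_eq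
    by (intro exI[of _ "e y c"]) (use e_L2[of y c] in auto)
  then have "sqrt (\<rho> y) \<le> Sup A" using bdd by (rule cSup_upper)
  then have "sqrt (\<rho> y) \<le> comp_norm M \<phi>" by (simp add: comp_norm_def A_def)
  then have "(sqrt (\<rho> y))\<^sup>2 \<le> (comp_norm M \<phi>)\<^sup>2" by (intro power_mono) auto
  then show ?thesis using \<rho>_pos[of y] by simp
qed

lemma norm_upper:
  assumes B: "\<And>y. \<rho> y \<le> B"
  shows "comp_bounded M \<phi> \<and> (comp_norm M \<phi>)\<^sup>2 \<le> B"
proof -
  have B0: "B \<ge> 0" using B[of undefined] \<rho>_pos[of undefined] by simp
  have bnd: "f \<circ> \<phi> \<in> L2 M \<and> L2norm M (f \<circ> \<phi>) \<le> sqrt B * L2norm M f" if f: "f \<in> L2 M" for f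
  proof -
    have fin: "Q f < top" using f by (simp add: L2_def)
    have le: "Q (f \<circ> \<phi>) \<le> ennreal B * Q f" by (rule Qle[OF B])
    have fin2: "ennreal B * Q f < top" using fin by (simp add: ennreal_mult_less_top)
    have "f \<circ> \<phi> \<in> L2 M" using le fin2 by (simp add: L2_def)
    moreover have "enn2real (Q (f \<circ> \<phi>)) \<le> B * enn2real (Q f)"
      using enn2real_mono[OF le fin2] B0 by (simp add: enn2real_mult)
    then have "sqrt (enn2real (Q (f \<circ> \<phi>))) \<le> sqrt B * sqrt (enn2real (Q f))"
      by (metis real_sqrt_le_mono real_sqrt_mult)
    ultimately show ?thesis by (simp add: L2norm_def)
  qed
  have cb: "comp_bounded M \<phi>"
    unfolding comp_bounded_def comp_dom_def using bnd by blast
  define A where "A = {L2norm M (f \<circ> \<phi>) | f. f \<in> L2 M \<and> L2norm M f \<le> 1}"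
  have Ab: "\<And>z. z \<in> A \<Longrightarrow> z \<le> sqrt B"
  proof -
    fix z assume "z \<in> A"
    then obtain f where f: "f \<in> L2 M" "L2norm M f \<le> 1" "z = L2norm M (f \<circ> \<phi>)"
      unfolding A_def by blast
    have "z \<le> sqrt B * L2norm M f" using bnd f by simp
    also have "\<dots> \<le> sqrt B" using f(2) B0 by (simp add: mult_left_le)
    finally show "z \<le> sqrt B" .
  qed
  have 0: "0 \<in> A" unfolding A_def using zero_L2 L2norm_zero
    by (auto intro!: exI[of _ "\<lambda>_. 0"] simp: o_def)
  have "Sup A \<le> sqrt B" using 0 Ab by (intro cSup_least) auto
  moreover have "0 \<le> Sup A" using 0 Ab by (intro cSup_upper bdd_aboveI) auto
  ultimately have "(Sup A)\<^sup>2 \<le> (sqrt B)\<^sup>2" by (intro power_mono) auto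
  then show ?thesis using cb B0 by (simp add: comp_norm_def A_def)
qed

lemma below_iff:
  assumes c: "c > 0"
  shows "(\<forall>f \<in> comp_dom M \<phi>. L2norm M (f \<circ> \<phi>) \<ge> c * L2norm M f) \<longleftrightarrow> (\<forall>y. c\<^sup>2 \<le> \<rho> y)"
proof
  assume H: "\<forall>f \<in> comp_dom M \<phi>. L2norm M (f \<circ> \<phi>) \<ge> c * L2norm M f"
  show "\<forall>y. c\<^sup>2 \<le> \<rho> y"
  proof
    fix y
    have "c * L2norm M (e y 1) \<le> L2norm M (e y 1 \<circ> \<phi>)" using H e_dom[of y 1] by blast
    then have "c * sqrt (w y) \<le> sqrt (\<rho> y * w y)"
      by (simp add: L2norm_e L2norm_e_comp)
    then have "sqrt (c\<^sup>2 * w y) \<le> sqrt (\<rho> y * w y)" using c by (simp add: real_sqrt_mult)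
    then have "c\<^sup>2 * w y \<le> \<rho> y * w y" by simp
    then show "c\<^sup>2 \<le> \<rho> y" using w_pos[of y] by simp
  qed
next
  assume H: "\<forall>y. c\<^sup>2 \<le> \<rho> y"
  show "\<forall>f \<in> comp_dom M \<phi>. L2norm M (f \<circ> \<phi>) \<ge> c * L2norm M f"
  proof
    fix f assume f: "f \<in> comp_dom M \<phi>"
    have fin: "Q (f \<circ> \<phi>) < top" using f by (simp add: comp_dom_def L2_def)
    have le: "ennreal (c\<^sup>2) * Q f \<le> Q (f \<circ> \<phi>)" using H by (intro Qge) auto
    have "enn2real (ennreal (c\<^sup>2) * Q f) \<le> enn2real (Q (f \<circ> \<phi>))"
      by (rule enn2real_mono[OF le fin])
    then have "c\<^sup>2 * enn2real (Q f) \<le> enn2real (Q (f \<circ> \<phi>))" by (simp add: enn2real_mult)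
    then have "sqrt (c\<^sup>2 * enn2real (Q f)) \<le> sqrt (enn2real (Q (f \<circ> \<phi>)))" by (rule real_sqrt_le_mono)
    then show "L2norm M (f \<circ> \<phi>) \<ge> c * L2norm M f" using c by (simp add: L2norm_def real_sqrt_mult)
  qed
qed

definition psi where "psi y = (SOME x. \<phi> x = y)"

lemma phi_psi[simp]: "\<phi> (psi y) = y"
  unfolding psi_def by (rule someI_ex[OF surj])

lemma comp_inj: "f \<circ> \<phi> = g \<circ> \<phi> \<Longrightarrow> f = g"
proof
  fix y assume "f \<circ> \<phi> = g \<circ> \<phi>"
  then have "f (\<phi> (psi y)) = g (\<phi> (psi y))" by (metis comp_apply)
  then show "f y = g y" by simp
qed

lemma closed: "comp_closed M \<phi>"
  unfolding comp_closed_def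
proof (intro allI impI)
  fix g f h
  assume H: "(\<forall>n. g n \<in> comp_dom M \<phi>) \<and> f \<in> L2 M \<and> h \<in> L2 M \<and> L2_converges M g f \<and>
        L2_converges M (\<lambda>n. g n \<circ> \<phi>) h"
  have d1: "g n - f \<in> L2 M" for n using H L2_diff by (auto simp: comp_dom_def)
  have d2: "(g n \<circ> \<phi>) - h \<in> L2 M" for n using H L2_diff by (auto simp: comp_dom_def)
  have p1: "(\<lambda>n. g n y) \<longlonglongrightarrow> f y" for y using L2_conv_pt[of g f y] H d1 by auto
  have p2: "(\<lambda>n. g n (\<phi> x)) \<longlonglongrightarrow> h x" for x
    using L2_conv_pt[of "\<lambda>n. g n \<circ> \<phi>" h x] H d2 by simp
  have eq: "f \<circ> \<phi> = h"
  proof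
    fix x show "(f \<circ> \<phi>) x = h x" using LIMSEQ_unique[OF p1[of "\<phi> x"] p2[of x]] by simp
  qed
  show "f \<in> comp_dom M \<phi> \<and> f \<circ> \<phi> = h" using eq H by (simp add: comp_dom_def)
qed

lemma kernel: "finite_dim (comp_kernel M \<phi>)"
proof -
  have "f = (\<lambda>_. 0)" if "f \<circ> \<phi> = (\<lambda>_. 0)" for f :: "'v \<Rightarrow> complex"
    using comp_inj[of f "\<lambda>_. 0"] that by (simp add: o_def)
  then show ?thesis unfolding finite_dim_def comp_kernel_def by (intro exI[of _ "{}"]) auto
qed

lemma range_closed:
  assumes b0: "b > 0" and b: "\<And>y. b \<le> \<rho> y"
  shows "L2_closed_set M (comp_range M \<phi>)"
  unfolding L2_closed_set_def
proof (intro allI impI)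
  fix g h assume H: "(\<forall>n. g n \<in> comp_range M \<phi>) \<and> h \<in> L2 M \<and> L2_converges M g h"
  have "\<forall>n. \<exists>f. f \<in> comp_dom M \<phi> \<and> g n = f \<circ> \<phi>" using H by (auto simp: comp_range_def)
  then obtain fs where fs: "\<And>n. fs n \<in> comp_dom M \<phi>" "\<And>n. g n = fs n \<circ> \<phi>" by metis
  have d: "g n - h \<in> L2 M" for n using fs H L2_diff by (auto simp: comp_dom_def)
  have p: "(\<lambda>n. g n x) \<longlonglongrightarrow> h x" for x using L2_conv_pt[of g h x] H d by auto
  define f where "f = h \<circ> psi"
  have eq: "f \<circ> \<phi> = h"
  proof
    fix x
    have "(\<lambda>n. g n (psi (\<phi> x))) = (\<lambda>n. g n x)" using fs(2) by simp
    then have "(\<lambda>n. g n x) \<longlonglongrightarrow> h (psi (\<phi> x))" using p[of "psi (\<phi> x)"] by simp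
    then show "(f \<circ> \<phi>) x = h x" using LIMSEQ_unique p[of x] by (simp add: f_def)
  qed
  have "ennreal b * Q f \<le> Q h" using Qge[of b f, OF b] unfolding eq .
  then have "ennreal b * Q f < top" using H by (auto simp: L2_def intro: le_less_trans)
  then have "Q f < top" using b0 by (auto simp: ennreal_mult_less_top)
  then have "f \<in> L2 M" by (simp add: L2_def)
  moreover have "f \<circ> \<phi> \<in> L2 M" using eq H by simp
  ultimately have "f \<in> comp_dom M \<phi>" by (simp add: comp_dom_def)
  then show "h \<in> comp_range M \<phi>" using eq unfolding comp_range_def by force
qed

lemma seq_int:
  assumes inj: "inj v" and z: "\<And>x. x \<notin> range v \<Longrightarrow> g x = 0"
  shows "(\<integral>\<^sup>+ x. g x \<partial>M) = (\<Sum>k. g (v k) * ennreal (w (v k)))"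
proof -
  have "(\<integral>\<^sup>+ x. g x \<partial>M) = (\<integral>\<^sup>+ x. (\<Sum>k. g (v k) * indicator {v k} x) \<partial>M)"
  proof (rule nn_integral_cong)
    fix x show "g x = (\<Sum>k. g (v k) * indicator {v k} x)"
    proof (cases "x \<in> range v")
      case True
      then obtain j where j: "x = v j" by auto
      have "(\<Sum>k. g (v k) * indicator {v k} x) = (\<Sum>k\<in>{j}. g (v k) * indicator {v k} x)"
        by (rule suminf_finite) (use inj j in \<open>auto simp: inj_eq split: split_indicator\<close>)
      then show ?thesis using j by simp
    next
      case False
      then have "\<And>k. indicator {v k} x = (0::ennreal)" by (auto simp: indicator_def)
      then show ?thesis using z False by simp
    qed
  qed
  also have "\<dots> = (\<Sum>k. \<integral>\<^sup>+ x. g (v k) * indicator {v k} x \<partial>M)"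
    by (rule nn_integral_suminf) simp
  also have "\<dots> = (\<Sum>k. g (v k) * ennreal (w (v k)))"
    using sets_M by (simp add: nn_integral_cmult_indicator wE)
  finally show ?thesis .
qed

definition FK :: "(nat \<Rightarrow> 'v) \<Rightarrow> nat set \<Rightarrow> 'v \<Rightarrow> complex" where
  "FK v K y = (if y \<in> v ` K then complex_of_real (1 / sqrt (w y)) else 0)"

lemma FK_sq: "(cmod (FK v K y))\<^sup>2 = (if y \<in> v ` K then 1 / w y else 0)"
  using w_pos[of y] by (simp add: FK_def power_divide norm_divide)

lemma QK:
  assumes inj: "inj v" and h: "\<And>y. cmod (h y) = cmod (FK v K y)"
  shows "Q h = (\<Sum>k. ennreal (if k \<in> K then 1 else 0))"
    and "Q (h \<circ> \<phi>) = (\<Sum>k. ennreal (if k \<in> K then \<rho> (v k) else 0))"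
proof -
  have mem: "v k \<in> v ` K \<longleftrightarrow> k \<in> K" for k using inj by (auto simp: inj_eq)
  have "Q h = (\<integral>\<^sup>+ x. ennreal (if x \<in> v ` K then 1 / w x else 0) \<partial>M)"
    by (simp add: h FK_sq)
  also have "\<dots> = (\<Sum>k. ennreal (if v k \<in> v ` K then 1 / w (v k) else 0) * ennreal (w (v k)))"
    by (rule seq_int[OF inj]) auto
  also have "\<dots> = (\<Sum>k. ennreal (if k \<in> K then 1 else 0))"
    using w_pos by (intro suminf_cong) (auto simp: mem ennreal_mult[symmetric] less_imp_le)
  finally show "Q h = (\<Sum>k. ennreal (if k \<in> K then 1 else 0))" .
  have "Q (h \<circ> \<phi>) = (\<integral>\<^sup>+ x. ennreal (\<rho> x) * ennreal (if x \<in> v ` K then 1 / w x else 0) \<partial>M)"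
    unfolding Q_comp by (simp add: h FK_sq)
  also have "\<dots> = (\<Sum>k. ennreal (\<rho> (v k)) * ennreal (if v k \<in> v ` K then 1 / w (v k) else 0) * ennreal (w (v k)))"
    by (rule seq_int[OF inj]) auto
  also have "\<dots> = (\<Sum>k. ennreal (if k \<in> K then \<rho> (v k) else 0))"
    using w_pos \<rho>_pos by (intro suminf_cong) (auto simp: mem ennreal_mult[symmetric] less_imp_le)
  finally show "Q (h \<circ> \<phi>) = (\<Sum>k. ennreal (if k \<in> K then \<rho> (v k) else 0))" .
qed

lemma suminf_one_top: "(\<Sum>k. (1::ennreal)) = top"
proof (rule ccontr)
  assume "(\<Sum>k. (1::ennreal)) \<noteq> top"
  then obtain n where n: "(\<Sum>k. (1::ennreal)) < of_nat n"
    using ennreal_Ex_less_of_nat top.not_eq_extremum by blast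
  have "(\<Sum>k<n. (1::ennreal)) \<le> (\<Sum>k. 1)" by (rule sum_le_suminf[OF summableI]) auto
  then show False using n by simp
qed

lemma geo_tail: "(\<lambda>k. if n \<le> k then (1/2::real)^k else 0) sums ((1/2)^n * 2)"
proof -
  have "(\<lambda>i. (1/2::real)^n * (1/2)^i) sums ((1/2)^n * (1 / (1 - 1/2)))"
    by (intro sums_mult geometric_sums) simp
  then have "(\<lambda>i. (\<lambda>k. if n \<le> k then (1/2::real)^k else 0) (i + n)) sums ((1/2)^n * 2)"
    by (simp add: power_add mult.commute)
  then show ?thesis by (subst (asm) sums_iff_shift) simp
qed

lemma range_not_closed:
  assumes small: "\<And>b. b > 0 \<Longrightarrow> \<exists>y. \<rho> y < b"
  shows "\<not> L2_closed_set M (comp_range M \<phi>)"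
proof
  assume C: "L2_closed_set M (comp_range M \<phi>)"
  define v where "v = vseq \<rho>"
  have v0: "\<rho> (v 0) < 1" using someI_ex[OF small[of 1]] by (simp add: v_def)
  have vS: "\<rho> (v (Suc k)) < min ((1/2)^Suc k) (\<rho> (v k))" for k
    using someI_ex[OF small[of "min ((1/2)^Suc k) (\<rho> (v k))"]] \<rho>_pos[of "v k"] by (simp add: v_def)
  have vk: "\<rho> (v k) < (1/2)^k" for k by (cases k) (use v0 vS in auto)
  have sm: "strict_mono (\<lambda>k. - \<rho> (v k))" by (rule strict_monoI_Suc) (use vS in auto)
  have inj: "inj v"
  proof (rule injI)
    fix k l assume "v k = v l"
    then have "- \<rho> (v k) = - \<rho> (v l)" by simp
    then show "k = l" using strict_mono_eq[OF sm] by simp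
  qed
  define F where "F = FK v UNIV"
  define Fn where "Fn n = FK v {..<n}" for n
  have "Q F = (\<Sum>k. ennreal (if k \<in> UNIV then 1 else 0))" by (rule QK(1)[OF inj]) (simp add: F_def)
  then have "Q F = top" using suminf_one_top by simp
  then have nF: "F \<notin> L2 M" by (simp add: L2_def)
  have sumfin: "(\<Sum>k. ennreal (if k \<in> K then \<rho> (v k) else 0)) \<le> ennreal ((1/2)^n * 2)"
    if "K \<subseteq> {n..}" for K n
  proof -
    have pw: "ennreal (if k \<in> K then \<rho> (v k) else 0) \<le> ennreal (if n \<le> k then (1/2)^k else 0)" for k
    proof (cases "k \<in> K")
      case True
      then have "n \<le> k" using that by auto
      then show ?thesis using vk[of k] True by (auto intro!: ennreal_leI)
    qed simp
    have "(\<Sum>k. ennreal (if k \<in> K then \<rho> (v k) else 0)) \<le> (\<Sum>k. ennreal (if n \<le> k then (1/2)^k else 0))"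
      by (rule suminf_le[OF pw summableI summableI])
    also have "\<dots> = ennreal ((1/2)^n * 2)" by (rule suminf_ennreal_eq[OF _ geo_tail]) simp
    finally show ?thesis .
  qed
  have QFphi: "Q (F \<circ> \<phi>) < top"
  proof -
    have "Q (F \<circ> \<phi>) = (\<Sum>k. ennreal (if k \<in> UNIV then \<rho> (v k) else 0))" by (rule QK(2)[OF inj]) (simp add: F_def)
    also have "\<dots> \<le> ennreal ((1/2)^0 * 2)" by (rule sumfin) auto
    finally show ?thesis by (simp add: le_less_trans)
  qed
  have Fn_dom: "Fn n \<in> comp_dom M \<phi>" for n
  proof -
    have "Q (Fn n) = (\<Sum>k. ennreal (if k \<in> {..<n} then 1 else 0))" by (rule QK(1)[OF inj]) (simp add: Fn_def)
    also have "\<dots> = (\<Sum>k\<in>{..<n}. ennreal (if k \<in> {..<n} then 1 else 0))" by (rule suminf_finite) auto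
    finally have 1: "Q (Fn n) < top" by (simp add: of_nat_less_top)
    have "Q (Fn n \<circ> \<phi>) \<le> Q (F \<circ> \<phi>)"
      unfolding Q_comp
      by (intro nn_integral_mono mult_left_mono ennreal_leI) (auto simp: F_def Fn_def FK_sq)
    then have 2: "Q (Fn n \<circ> \<phi>) < top" using QFphi by (simp add: le_less_trans)
    show ?thesis using 1 2 by (simp add: comp_dom_def L2_def)
  qed
  have conv: "L2_converges M (\<lambda>n. Fn n \<circ> \<phi>) (F \<circ> \<phi>)"
    unfolding L2_converges_def
  proof (rule Lim_null_comparison)
    show "(\<lambda>n. sqrt ((1/2)^n * 2)) \<longlonglongrightarrow> 0"
      using tendsto_real_sqrt[OF tendsto_mult_left_zero[OF LIMSEQ_power_zero[of "1/2::real"]], of 2] by simp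
    show "\<forall>\<^sub>F n in sequentially. norm (L2norm M ((Fn n \<circ> \<phi>) - (F \<circ> \<phi>))) \<le> sqrt ((1/2)^n * 2)"
    proof (rule always_eventually, rule allI)
      fix n
      have eqd: "(Fn n \<circ> \<phi>) - (F \<circ> \<phi>) = (Fn n - F) \<circ> \<phi>" by (simp add: fun_eq_iff)
      have cm: "cmod ((Fn n - F) y) = cmod (FK v {n..} y)" for y
        using inj by (auto simp: Fn_def F_def FK_def inj_image_mem_iff[OF inj] inj_eq[OF inj] not_less)
      have "Q ((Fn n - F) \<circ> \<phi>) = (\<Sum>k. ennreal (if k \<in> {n..} then \<rho> (v k) else 0))"
        by (rule QK(2)[OF inj cm])
      also have "\<dots> \<le> ennreal ((1/2)^n * 2)" by (rule sumfin) auto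
      finally have le: "Q ((Fn n - F) \<circ> \<phi>) \<le> ennreal ((1/2)^n * 2)" .
      have "enn2real (Q ((Fn n - F) \<circ> \<phi>)) \<le> (1/2)^n * 2"
        using enn2real_mono[OF le] by simp
      then have "L2norm M ((Fn n - F) \<circ> \<phi>) \<le> sqrt ((1/2)^n * 2)"
        unfolding L2norm_def by (rule real_sqrt_le_mono)
      then show "norm (L2norm M ((Fn n \<circ> \<phi>) - (F \<circ> \<phi>))) \<le> sqrt ((1/2)^n * 2)"
        by (simp add: eqd L2norm_def)
    qed
  qed
  have "F \<circ> \<phi> \<in> comp_range M \<phi>"
    using C unfolding L2_closed_set_def
  proof (elim allE impE)
    show "(\<forall>n. Fn n \<circ> \<phi> \<in> comp_range M \<phi>) \<and> F \<circ> \<phi> \<in> L2 M \<and> L2_converges M (\<lambda>n. Fn n \<circ> \<phi>) (F \<circ> \<phi>)"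
      using Fn_dom QFphi conv by (auto simp: comp_range_def L2_def)
  qed
  then obtain f' where "f' \<in> comp_dom M \<phi>" "F \<circ> \<phi> = f' \<circ> \<phi>" by (auto simp: comp_range_def)
  then have "F \<in> L2 M" using comp_inj[of F f'] by (simp add: comp_dom_def)
  then show False using nF by simp
qed

end


lemma kh_succ:
  assumes k: "\<forall>m. \<kappa> m \<ge> 1"
  shows "kappa_hat \<kappa> (m+1) = real (\<kappa> m) * kappa_hat \<kappa> m"
proof -
  consider "m \<ge> 1" | "m = 0" | "m = -1" | "m \<le> -2" by linarith
  then show ?thesis
  proof cases
    case 1
    have "{0..m} = insert m {0..m-1}" using 1 by auto
    then show ?thesis using 1 by (simp add: kappa_hat_def)
  next
    case 2 then show ?thesis by (simp add: kappa_hat_def)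
  next
    case 3
    have "\<kappa> (-1) \<ge> 1" using k by simp
    then show ?thesis using 3 by (simp add: kappa_hat_def)
  next
    case 4
    have s: "{1..-m} = insert (-m) {1..-(m+1)}" using 4 by auto
    have "\<kappa> m \<ge> 1" using k by simp
    then show ?thesis using 4 by (simp add: kappa_hat_def s)
  qed
qed

lemma kh_pos:
  assumes k: "\<forall>m. \<kappa> m \<ge> 1"
  shows "kappa_hat \<kappa> m > 0"
proof -
  have p: "\<And>A. (\<Prod>j\<in>A. real (\<kappa> (f j))) > 0" for f :: "int \<Rightarrow> int"
    using k by (intro prod_pos) (auto simp: less_le_trans[OF zero_less_one] )
  show ?thesis using p[of id] p[of uminus] by (simp add: kappa_hat_def)
qed


theorem proposition46:
  fixes E :: "('v \<times> 'v) set" and \<phi> :: "'v \<Rightarrow> 'v" and M :: "'v measure"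
    and G :: "int \<Rightarrow> 'v set" and \<kappa> :: "int \<Rightarrow> nat" and \<alpha> :: "int \<Rightarrow> real"
    and \<nu> :: "real measure" and I :: "'i itself"
  assumes tree: "directed_tree E" and "rootless E" and "leafless E"
    and "countable (UNIV :: 'v set)" and "infinite (UNIV :: 'v set)"
    and parent: "\<forall>x. (\<phi> x, x) \<in> E"
    and M_sets: "sets M = UNIV"
    and M_pts: "\<forall>x. 0 < emeasure M {x} \<and> emeasure M {x} < \<infinity>"
    and G_disj: "\<forall>m n. m \<noteq> n \<longrightarrow> G m \<inter> G n = {}"
    and G_cover: "(\<Union>m. G m) = UNIV"
    and G_succ: "\<forall>m. G (m + 1) = (\<Union>x\<in>G m. \<phi> -` {x})"
    and \<kappa>_pos: "\<forall>m. \<kappa> m \<ge> 1"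
    and \<alpha>_pos: "\<forall>m. \<alpha> m > 0"
    and \<kappa>_card: "\<forall>m. \<forall>x\<in>G m. card (\<phi> -` {x}) = \<kappa> m"
    and \<alpha>_meas: "\<forall>m. \<forall>x\<in>G m. measure M {x} = \<alpha> m"
    and subnormal: "comp_subnormal_in I M \<phi>"
    and rep: "representing_measure (\<lambda>m. \<alpha> m * kappa_hat \<kappa> m) \<nu>"
  shows "msupp \<nu> \<noteq> {} \<and>
    (comp_bounded M \<phi> \<longleftrightarrow> bdd_above (msupp \<nu>)) \<and>
    (comp_bounded M \<phi> \<longrightarrow> (comp_norm M \<phi>)\<^sup>2 = Sup (msupp \<nu>)) \<and>
    (\<forall>c::real. c > 0 \<longrightarrow>
       ((\<forall>f \<in> comp_dom M \<phi>. L2norm M (f \<circ> \<phi>) \<ge> c * L2norm M f) \<longleftrightarrow> Inf (msupp \<nu>) \<ge> c\<^sup>2)) \<and>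
    (comp_left_semi_fredholm M \<phi> \<longleftrightarrow> Inf (msupp \<nu>) > 0)"
proof -
  define a where "a m = \<alpha> m * kappa_hat \<kappa> m" for m
  have apos: "a m > 0" for m using \<alpha>_pos kh_pos[OF \<kappa>_pos] by (simp add: a_def)
  have asucc: "a (m+1) = \<alpha> (m+1) * real (\<kappa> m) * kappa_hat \<kappa> m" for m
    by (simp add: a_def kh_succ[OF \<kappa>_pos])
  have surj: "\<exists>y. \<phi> y = x" for x
  proof -
    obtain y where xy: "(x, y) \<in> E" using \<open>leafless E\<close> unfolding leafless_def by blast
    have "(\<phi> y, y) \<in> E" using parent by blast
    then have "\<phi> y = x" using tree xy unfolding directed_tree_def by blast
    then show ?thesis by blast
  qed
  have Gex: "\<exists>m. x \<in> G m" for x using G_cover by blast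
  have Guniq: "x \<in> G m \<Longrightarrow> x \<in> G n \<Longrightarrow> m = n" for x m n using G_disj by blast
  define gi where "gi x = (THE m. x \<in> G m)" for x
  have gi: "x \<in> G (gi x)" for x
    unfolding gi_def using Gex[of x] Guniq[of x] by (metis theI)
  have gi_eq: "x \<in> G m \<Longrightarrow> gi x = m" for x m using gi Guniq by blast
  have child: "x \<in> G m \<Longrightarrow> \<phi> x = y \<Longrightarrow> y \<in> G (m - 1)" for x y m
  proof -
    assume x: "x \<in> G m" and y: "\<phi> x = y"
    have "x \<in> G (gi y + 1)" using G_succ gi[of y] y by auto
    then have "gi y + 1 = m" using Guniq x by blast
    then have "gi y = m - 1" by simp
    then show ?thesis using gi[of y] by simp
  qed
  have fibG: "\<phi> -` {y} \<subseteq> G (gi y + 1)" for y using G_succ gi[of y] by auto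
  have Gne: "G m \<noteq> {}" for m
  proof -
    obtain x0 where "x0 \<in> G (gi undefined)" using gi by blast
    show ?thesis
    proof (induction m rule: int_induct[where k = "gi undefined"])
      case base then show ?case using \<open>x0 \<in> G (gi undefined)\<close> by blast
    next
      case (step1 i)
      then obtain y where "y \<in> G i" by blast
      obtain x where "\<phi> x = y" using surj by blast
      then have "x \<in> G (i+1)" using G_succ \<open>y \<in> G i\<close> by auto
      then show ?case by blast
    next
      case (step2 i)
      then obtain x where "x \<in> G i" by blast
      then have "\<phi> x \<in> G (i - 1)" using child by blast
      then show ?case by blast
    qed
  qed
  define \<rho> where "\<rho> y = a (gi y + 1) / a (gi y)" for y
  have \<rho>_pos: "\<rho> y > 0" for y using apos by (simp add: \<rho>_def)
  have w: "emeasure M {x} = ennreal (\<alpha> (gi x))" for x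
  proof -
    have h1: "emeasure M {x} \<noteq> top" using M_pts by (metis infinity_ennreal_def order_less_irrefl)
    show ?thesis using emeasure_eq_ennreal_measure[OF h1] \<alpha>_meas gi[of x] by simp
  qed
  have fib: "emeasure M (\<phi> -` {y}) = ennreal (\<rho> y) * emeasure M {y}" for y
  proof -
    let ?m = "gi y"
    have card: "card (\<phi> -` {y}) = \<kappa> ?m" using \<kappa>_card gi[of y] by blast
    then have fin: "finite (\<phi> -` {y})" using \<kappa>_pos by (metis card.infinite not_one_le_zero)
    have "emeasure M (\<phi> -` {y}) = (\<Sum>x\<in>\<phi> -` {y}. emeasure M {x})"
      using fin M_sets by (intro emeasure_eq_sum_singleton) auto
    also have "\<dots> = (\<Sum>x\<in>\<phi> -` {y}. ennreal (\<alpha> (?m + 1)))"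
      using fibG[of y] gi_eq w by (intro sum.cong) auto
    also have "\<dots> = ennreal (real (\<kappa> ?m) * \<alpha> (?m + 1))"
      using card \<alpha>_pos by (simp add: ennreal_mult' ennreal_of_nat_eq_real_of_nat)
    also have "real (\<kappa> ?m) * \<alpha> (?m + 1) = \<rho> y * \<alpha> ?m"
      using apos[of ?m] \<alpha>_pos[rule_format, of ?m] kh_pos[OF \<kappa>_pos, of ?m] kh_succ[OF \<kappa>_pos, of ?m]
      by (simp add: \<rho>_def a_def field_simps)
    finally show ?thesis using w[of y] \<rho>_pos[of y] \<alpha>_pos by (simp add: ennreal_mult')
  qed
  interpret D: disc M \<phi> \<rho>
    using M_sets assms(4) M_pts surj fib \<rho>_pos by unfold_locales auto
  interpret Mo: mom \<nu> a
    using rep apos unfolding representing_measure_def a_def by unfold_locales auto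
  have R1: "(\<forall>y. \<rho> y \<le> B) \<longleftrightarrow> (\<forall>m. a (m+1) \<le> B * a m)" for B
  proof
    assume H: "\<forall>y. \<rho> y \<le> B"
    show "\<forall>m. a (m+1) \<le> B * a m"
    proof
      fix m obtain y where "y \<in> G m" using Gne by blast
      then have "a (m+1) / a m \<le> B" using H gi_eq[of y m] by (auto simp: \<rho>_def)
      then show "a (m+1) \<le> B * a m" using apos[of m] by (simp add: divide_le_eq)
    qed
  next
    assume H: "\<forall>m. a (m+1) \<le> B * a m"
    show "\<forall>y. \<rho> y \<le> B" using H apos by (simp add: \<rho>_def divide_le_eq)
  qed
  have R2: "(\<forall>y. c \<le> \<rho> y) \<longleftrightarrow> (\<forall>m. c * a m \<le> a (m+1))" for c
  proof
    assume H: "\<forall>y. c \<le> \<rho> y"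
    show "\<forall>m. c * a m \<le> a (m+1)"
    proof
      fix m obtain y where "y \<in> G m" using Gne by blast
      then have "c \<le> a (m+1) / a m" using H gi_eq[of y m] by (auto simp: \<rho>_def)
      then show "c * a m \<le> a (m+1)" using apos[of m] by (simp add: le_divide_eq)
    qed
  next
    assume H: "\<forall>m. c * a m \<le> a (m+1)"
    show "\<forall>y. c \<le> \<rho> y" using H apos by (simp add: \<rho>_def le_divide_eq)
  qed
  let ?S = "msupp \<nu>"
  have Sne: "?S \<noteq> {}" by (rule Mo.S_ne)
  have bddb: "bdd_below ?S" using Mo.S_pos by (intro bdd_belowI[of _ 0]) (auto simp: less_imp_le)
  have Inf0: "Inf ?S \<ge> 0" using Sne Mo.S_pos by (intro cInf_greatest) (auto simp: less_imp_le)
  have bounded: "comp_bounded M \<phi> \<longleftrightarrow> bdd_above ?S"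
  proof
    assume cb: "comp_bounded M \<phi>"
    have "\<forall>y. \<rho> y \<le> (comp_norm M \<phi>)\<^sup>2" using D.norm_lower[OF cb] by blast
    then have "\<forall>m. a (m+1) \<le> (comp_norm M \<phi>)\<^sup>2 * a m" using R1 by blast
    then show "bdd_above ?S" using Mo.sup_bound by (intro bdd_aboveI) blast
  next
    assume bd: "bdd_above ?S"
    have "\<forall>m. a (m+1) \<le> Sup ?S * a m" using Mo.upper cSup_upper[OF _ bd] by blast
    then have "\<forall>y. \<rho> y \<le> Sup ?S" using R1 by blast
    then show "comp_bounded M \<phi>" using D.norm_upper by blast
  qed
  have norm: "comp_bounded M \<phi> \<longrightarrow> (comp_norm M \<phi>)\<^sup>2 = Sup ?S"
  proof
    assume cb: "comp_bounded M \<phi>"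
    then have bd: "bdd_above ?S" using bounded by simp
    have "\<forall>m. a (m+1) \<le> Sup ?S * a m" using Mo.upper cSup_upper[OF _ bd] by blast
    then have "\<forall>y. \<rho> y \<le> Sup ?S" using R1 by blast
    then have 1: "(comp_norm M \<phi>)\<^sup>2 \<le> Sup ?S" using D.norm_upper by blast
    have "\<forall>y. \<rho> y \<le> (comp_norm M \<phi>)\<^sup>2" using D.norm_lower[OF cb] by blast
    then have "\<forall>m. a (m+1) \<le> (comp_norm M \<phi>)\<^sup>2 * a m" using R1 by blast
    then have 2: "Sup ?S \<le> (comp_norm M \<phi>)\<^sup>2" using Mo.sup_bound Sne by (intro cSup_least) blast+
    show "(comp_norm M \<phi>)\<^sup>2 = Sup ?S" using 1 2 by simp
  qed
  have below: "\<forall>c::real. c > 0 \<longrightarrow>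
       ((\<forall>f \<in> comp_dom M \<phi>. L2norm M (f \<circ> \<phi>) \<ge> c * L2norm M f) \<longleftrightarrow> Inf ?S \<ge> c\<^sup>2)"
  proof (intro allI impI)
    fix c :: real assume c: "c > 0"
    have "(\<forall>f \<in> comp_dom M \<phi>. L2norm M (f \<circ> \<phi>) \<ge> c * L2norm M f) \<longleftrightarrow> (\<forall>m. c\<^sup>2 * a m \<le> a (m+1))"
      using D.below_iff[OF c] R2 by blast
    also have "\<dots> \<longleftrightarrow> Inf ?S \<ge> c\<^sup>2"
    proof
      assume "\<forall>m. c\<^sup>2 * a m \<le> a (m+1)"
      then have "\<forall>t\<in>?S. c\<^sup>2 \<le> t" using Mo.inf_bound[of "c\<^sup>2"] c by auto
      then show "Inf ?S \<ge> c\<^sup>2" using Sne by (intro cInf_greatest) auto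
    next
      assume H: "Inf ?S \<ge> c\<^sup>2"
      have "\<forall>m. Inf ?S * a m \<le> a (m+1)" using Mo.lower[of "Inf ?S"] cInf_lower[OF _ bddb] Inf0 by blast
      then show "\<forall>m. c\<^sup>2 * a m \<le> a (m+1)"
        using H apos by (meson dual_order.trans less_imp_le mult_right_mono)
    qed
    finally show "(\<forall>f \<in> comp_dom M \<phi>. L2norm M (f \<circ> \<phi>) \<ge> c * L2norm M f) \<longleftrightarrow> Inf ?S \<ge> c\<^sup>2" .
  qed
  have fred: "comp_left_semi_fredholm M \<phi> \<longleftrightarrow> Inf ?S > 0"
  proof
    assume "comp_left_semi_fredholm M \<phi>"
    then have C: "L2_closed_set M (comp_range M \<phi>)" by (simp add: comp_left_semi_fredholm_def)
    obtain b where b: "b > 0" "\<forall>y. b \<le> \<rho> y"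
      using D.range_not_closed C by (meson not_le)
    then have "\<forall>m. b * a m \<le> a (m+1)" using R2 by blast
    then have "\<forall>t\<in>?S. b \<le> t" using Mo.inf_bound b by blast
    then have "Inf ?S \<ge> b" using Sne by (intro cInf_greatest) auto
    then show "Inf ?S > 0" using b by simp
  next
    assume H: "Inf ?S > 0"
    have "\<forall>m. Inf ?S * a m \<le> a (m+1)" using Mo.lower[of "Inf ?S"] cInf_lower[OF _ bddb] Inf0 by blast
    then have "\<forall>y. Inf ?S \<le> \<rho> y" using R2 by blast
    then have "L2_closed_set M (comp_range M \<phi>)" using D.range_closed H by blast
    then show "comp_left_semi_fredholm M \<phi>"
      using D.closed D.kernel by (simp add: comp_left_semi_fredholm_def)
  qed
  show ?thesis using Sne bounded norm below fred by blast
qed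


end
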